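(* As an identity of formal power series in $x$, \[ \frac{2(2-x)}{(1-x)^2} \sum_{j=0}^\infty f_j\!\left(2-\frac1x, 2-\frac1x\right) = \frac{3}{1-x} + \frac{1-x}{(1-2x)^2}\sum_{j=0}^\infty f_j\!\left(3-\frac1x,3-\frac1x\right). \]
   Context: $(x)_j = x(x+1)\cdots(x+j-1)$ denotes the Pochhammer symbol (with $(x)_0=1$) and $f_j(x,y) = \frac{(j!)^2}{(x)_j (y)_j}$. Note $f_j(2-1/x,2-1/x) = \frac{(j!)^2x^{2j}}{\prod_{i=2}^{j+1}(1-ix)^2}$ and $f_j(3-1/x,3-1/x)=\frac{(j!)^2x^{2j}}{\prod_{i=3}^{j+2}(1-ix)^2}$, which are power series in $x$ of order at least $2j$, so the sums converge formally. *)

theory Defs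
  imports "HOL-Computational_Algebra.Formal_Power_Series"
begin

text \<open>For a natural number a, the formal power series
  f_j(a - 1/x, a - 1/x) = (j!)^2 x^(2j) / prod_{i=a}^{j+a-1} (1 - i x)^2,
  as given in the context of the paper.\<close>
definition fterm :: "nat \<Rightarrow> nat \<Rightarrow> real fps" where
  "fterm a j = fps_const ((fact j)^2) * fps_X ^ (2 * j)
      / (\<Prod>i = a..j + a - 1. (1 - of_nat i * fps_X))^2"

end

theory Submission
  imports Defs
begin

unbundle fps_syntax

lemma fps_tendsto_mult_left:
  fixes S :: "'b \<Rightarrow> real fps"
  assumes "(S \<longlongrightarrow> s) F"
  shows "((\<lambda>x. c * S x) \<longlongrightarrow> c * s) F"
proof (rule tendsto_fpsI)
  fix n
  have "eventually (\<lambda>x. \<forall>m\<in>{..n}. S x $ m = s $ m) F"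
    using assms by (simp add: tendsto_fps_iff eventually_ball_finite_distrib)
  then show "eventually (\<lambda>x. (c * S x) $ n = (c*s) $ n) F"
    by eventually_elim (auto simp: fps_mult_nth intro!: sum.cong)
qed

lemma sums_mult_fps:
  fixes f :: "nat \<Rightarrow> real fps"
  assumes "f sums s"
  shows "(\<lambda>j. c * f j) sums (c * s)"
  using fps_tendsto_mult_left[OF assms[unfolded sums_def], of c]
  unfolding sums_def by (simp add: sum_distrib_left)

lemma sums_diff_fps:
  fixes f g :: "nat \<Rightarrow> real fps"
  assumes "f sums a" "g sums b"
  shows "(\<lambda>j. f j - g j) sums (a - b)"
  unfolding sums_def sum_subtractf
proof (rule tendsto_fpsI)
  fix n
  have "eventually (\<lambda>N. (\<Sum>j<N. f j) $ n = a $ n) sequentially"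
    "eventually (\<lambda>N. (\<Sum>j<N. g j) $ n = b $ n) sequentially"
    using assms unfolding sums_def tendsto_fps_iff by blast+
  then show "eventually (\<lambda>N. ((\<Sum>j<N. f j) - (\<Sum>j<N. g j)) $ n = (a - b) $ n) sequentially"
    by eventually_elim simp
qed

lemma summable_fps_deg:
  fixes f :: "nat \<Rightarrow> real fps"
  assumes "\<And>j n. n < j \<Longrightarrow> f j $ n = 0"
  shows "summable f"
  unfolding summable_def sums_def
proof (intro exI tendsto_fpsI)
  fix n
  show "eventually (\<lambda>N. (\<Sum>j<N. f j) $ n = Abs_fps (\<lambda>n. \<Sum>j\<le>n. f j $ n) $ n) sequentially"
    unfolding eventually_sequentially
  proof (intro exI allI impI)
    fix N assume "Suc n \<le> N"
    then have "(\<Sum>j<N. f j $ n) = (\<Sum>j\<le>n. f j $ n)"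
      by (intro sum.mono_neutral_right) (auto intro: assms)
    then show "(\<Sum>j<N. f j) $ n = Abs_fps (\<lambda>n. \<Sum>j\<le>n. f j $ n) $ n"
      by (simp add: fps_sum_nth)
  qed
qed

lemma telescope_fps:
  fixes G :: "nat \<Rightarrow> real fps"
  assumes "\<And>j n. n < j \<Longrightarrow> G j $ n = 0"
  shows "(\<lambda>j. G (Suc j) - G j) sums (- G 0)"
  unfolding sums_def sum_lessThan_telescope
proof (rule tendsto_fpsI)
  fix n
  show "eventually (\<lambda>N. (G N - G 0) $ n = (- G 0) $ n) sequentially"
    unfolding eventually_sequentially
    by (rule exI[of _ "Suc n"]) (auto simp: assms)
qed

lemma P0: "(\<Prod>i\<in>S. (1 - of_nat i * fps_X :: real fps)) $ 0 = 1"
  by (induction S rule: infinite_finite_induct) auto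

lemma fterm_eq: "fterm a j = fps_const ((fact j)^2) * fps_X^(2*j) *
   inverse (\<Prod>i = a..j + a - 1. (1 - of_nat i * fps_X :: real fps)) ^ 2"
  unfolding fterm_def
  by (subst fps_divide_unit) (simp_all add: P0 fps_inverse_power)

lemma X_pow_nth: "n < 2 * j \<Longrightarrow> (f * fps_X^(2*j)) $ n = (0::real)"
  by (simp add: fps_X_power_mult_right_nth)

lemma fterm_deg: "n < j \<Longrightarrow> fterm a j $ n = 0"
proof -
  assume "n < j"
  have "fterm a j = (fps_const ((fact j)^2) *
     inverse (\<Prod>i = a..j + a - 1. (1 - of_nat i * fps_X :: real fps)) ^ 2) * fps_X^(2*j)"
    by (simp add: fterm_eq mult_ac)
  then show ?thesis using \<open>n < j\<close> by (simp add: fps_X_power_mult_right_nth)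
qed

lemma key:
  fixes X ia ib ir iy n C Z :: "real fps"
  assumes "ia * (1 - X) = 1" "ir * (1 - (n+2) * X) = 1" "ib * (1 - 2 * X) = 1"
  shows "2*(2-X)*ia^2 * (C*Z*iy^2) - (1-X)*ib^2*(C*Z*(iy*ir*(1-2*X))^2)
    = (2*X*(1+n) - 3*(1-X))*ia^2*(C*(1+n)^2*(Z*X^2)*(iy*ir)^2)
      - (2*X*n-3*(1-X))*ia^2*(C*Z*iy^2)"
  using assms by algebra


lemma P_Suc: fixes j :: nat shows "(\<Prod>i = 2..Suc j + 2 - 1. f i) = (\<Prod>i = 2..j + 2 - 1. f i) * (f (j+2) :: real fps)"
  by (simp add: prod.cl_ivl_Suc)

lemma P_23: fixes j :: nat shows "(\<Prod>i = 3..j + 3 - 1. f i) * f 2 = (\<Prod>i = 2..j + 2 - 1. f i) * (f (j+2) :: real fps)"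
proof -
  have "(\<Prod>i = 2..j + 2 - 1. f i) * f (j+2) = (\<Prod>i = 2..Suc (Suc j). f i)"
    by (simp add: prod.cl_ivl_Suc)
  also have "\<dots> = f 2 * (\<Prod>i = 3..Suc (Suc j). f i)"
    by (subst prod.atLeast_Suc_atMost) (simp_all add: numeral_3_eq_3)
  finally show ?thesis by (simp add: mult.commute numeral_3_eq_3)
qed

theorem mainTheorem4:
  shows "summable (fterm 2) \<and> summable (fterm 3) \<and>
    fps_const 2 * (2 - fps_X) / (1 - fps_X)^2 * (\<Sum>j. fterm 2 j)
      = fps_const 3 / (1 - fps_X)
        + (1 - fps_X) / (1 - fps_const 2 * fps_X)^2 * (\<Sum>j. fterm 3 j)"
proof -
  let ?X = "fps_X :: real fps"
  have s2: "summable (fterm 2)" by (rule summable_fps_deg) (rule fterm_deg)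
  have s3: "summable (fterm 3)" by (rule summable_fps_deg) (rule fterm_deg)
  define ia where "ia = inverse (1 - ?X)"
  define ib where "ib = inverse (1 - 2 * ?X)"
  have ia: "ia * (1 - ?X) = 1" unfolding ia_def by (rule inverse_mult_eq_1) simp
  have ib: "ib * (1 - 2 * ?X) = 1" unfolding ib_def by (rule inverse_mult_eq_1) simp
  define A where "A = (fps_const 2 * (2 - fps_X) / (1 - fps_X)^2 :: real fps)"
  define B where "B = ((1 - fps_X) / (1 - fps_const 2 * fps_X)^2 :: real fps)"
  have A: "A = 2 * (2 - ?X) * ia^2"
    unfolding A_def ia_def
    by (subst fps_divide_unit) (simp_all add: fps_inverse_power numeral_fps_const)
  have B: "B = (1 - ?X) * ib^2"
    unfolding B_def ib_def
    by (subst fps_divide_unit) (simp_all add: fps_inverse_power numeral_fps_const)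
  have C: "fps_const 3 / (1 - ?X) = 3 * ia"
    unfolding ia_def
    by (subst fps_divide_unit) (simp_all add: numeral_fps_const)
  define G where "G j = (2 * ?X * of_nat j - 3 * (1 - ?X)) * ia^2 * fterm 2 j" for j
  have Gdeg: "G j $ n = 0" if "n < j" for j n
  proof -
    have "G j = ((2 * ?X * of_nat j - 3 * (1 - ?X)) * ia^2 * fps_const ((fact j)^2) *
      inverse (\<Prod>i = 2..j + 2 - 1. (1 - of_nat i * fps_X :: real fps)) ^ 2) * fps_X^(2*j)"
      by (simp add: G_def fterm_eq mult_ac)
    then show ?thesis using that by (simp add: fps_X_power_mult_right_nth)
  qed
  have step: "A * fterm 2 j - B * fterm 3 j = G (Suc j) - G j" for j
  proof -
    define y where "y = (\<Prod>i = 2..j + 2 - 1. (1 - of_nat i * fps_X :: real fps))"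
    define r where "r = 1 - of_nat (j+2) * ?X"
    define iy where "iy = inverse y"
    define ir where "ir = inverse r"
    define Cj where "Cj = fps_const ((fact j)^2 :: real)"
    have ir: "ir * (1 - (of_nat j + 2) * ?X) = 1"
      unfolding ir_def r_def using inverse_mult_eq_1[of "1 - of_nat (j + 2) * fps_X :: real fps"] by (simp add: add.commute)
    have y0: "y $ 0 = 1" unfolding y_def by (rule P0)
    have inv_suc: "inverse (\<Prod>i = 2..Suc j + 2 - 1. (1 - of_nat i * fps_X :: real fps)) = iy * ir"
      unfolding P_Suc iy_def ir_def y_def r_def by (simp add: fps_inverse_mult)
    have "inverse (\<Prod>i = 3..j + 3 - 1. (1 - of_nat i * fps_X :: real fps)) * inverse (1 - 2 * ?X) = iy * ir"
    proof -
      have "(\<Prod>i = 3..j + 3 - 1. (1 - of_nat i * fps_X :: real fps)) * (1 - 2 * ?X) = y * r"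
        using P_23[of "\<lambda>i. 1 - of_nat i * fps_X" j] unfolding y_def r_def by simp
      then have "inverse ((\<Prod>i = 3..j + 3 - 1. (1 - of_nat i * fps_X :: real fps)) * (1 - 2 * ?X)) = inverse (y * r)"
        by (rule arg_cong)
      then show ?thesis unfolding iy_def ir_def by (simp only: fps_inverse_mult)
    qed
    then have inv3: "inverse (\<Prod>i = 3..j + 3 - 1. (1 - of_nat i * fps_X :: real fps)) = iy * ir * (1 - 2 * ?X)"
    proof -
      assume h: "inverse (\<Prod>i = 3..j + 3 - 1. (1 - of_nat i * fps_X :: real fps)) * inverse (1 - 2 * ?X) = iy * ir"
      let ?Q = "inverse (\<Prod>i = 3..j + 3 - 1. (1 - of_nat i * fps_X :: real fps))"
      have "?Q = ?Q * (ib * (1 - 2 * ?X))" using ib by simp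
      also have "\<dots> = (?Q * inverse (1 - 2 * ?X)) * (1 - 2 * ?X)" unfolding ib_def by (simp only: mult.assoc)
      also have "\<dots> = iy * ir * (1 - 2 * ?X)" by (simp only: h)
      finally show ?thesis .
    qed
    have f2: "fterm 2 j = Cj * fps_X^(2*j) * iy^2"
      by (simp add: fterm_eq Cj_def iy_def y_def)
    have f3: "fterm 3 j = Cj * fps_X^(2*j) * (iy * ir * (1 - 2 * ?X))^2"
      using inv3 by (simp add: fterm_eq Cj_def)
    have cs: "fps_const ((fact (Suc j))^2 :: real) = Cj * (1 + of_nat j)^2"
    proof -
      have "fps_const ((fact (Suc j))^2 :: real) = fps_const (of_nat (Suc j) ^ 2) * Cj"
        unfolding Cj_def fact_Suc by (simp only: of_nat_mult power_mult_distrib fps_const_mult)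
      also have "fps_const (of_nat (Suc j) ^ 2 :: real) = (1 + of_nat j)^2"
        by (simp only: fps_const_power[symmetric] fps_of_nat) (simp add: add.commute)
      finally show ?thesis by (simp only: mult.commute)
    qed
    have xs: "fps_X ^ (2 * Suc j) = (fps_X^(2*j) * ?X^2 :: real fps)"
      by (simp add: power_add power2_eq_square)
    have f2s: "fterm 2 (Suc j) = Cj * (1 + of_nat j)^2 * (fps_X^(2*j) * ?X^2) * (iy * ir)^2"
      unfolding fterm_eq inv_suc cs xs ..
    show ?thesis
      unfolding A B G_def f2 f3 f2s of_nat_Suc
      by (rule key[OF ia ir ib, where iy=iy and C=Cj and Z="fps_X^(2*j)"])
  qed
  have "(\<lambda>j. A * fterm 2 j - B * fterm 3 j) sums (A * suminf (fterm 2) - B * suminf (fterm 3))"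
    by (intro sums_diff_fps sums_mult_fps summable_sums s2 s3)
  moreover have "(\<lambda>j. A * fterm 2 j - B * fterm 3 j) sums (- G 0)"
    unfolding step by (rule telescope_fps) (rule Gdeg)
  ultimately have "A * suminf (fterm 2) - B * suminf (fterm 3) = - G 0"
    by (rule sums_unique2)
  also have "- G 0 = 3 * ia"
  proof -
    have "fterm 2 0 = 1" by (simp add: fterm_def)
    then have "- G 0 = 3 * (ia * (1 - ?X)) * ia" by (simp add: G_def power2_eq_square algebra_simps)
    then show ?thesis using ia by simp
  qed
  finally have "A * suminf (fterm 2) = 3 * ia + B * suminf (fterm 3)"
    by (simp add: algebra_simps)
  then show ?thesis using s2 s3 C unfolding A_def B_def by simp
qed

end
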